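(* Let $\mathcal H$ be a complex infinite-dimensional separable Hilbert space and let $H$ be a densely defined self-adjoint operator on $\mathcal H$ (so $H$ is affiliated with $\mathcal B(\mathcal H)$). Let $x\in\mathcal H$ be a unit vector. Then $x\in\mathcal H_{ac}(H)$ if and only if the rank one projection $x\otimes x$ is a norm absolutely continuous projection with respect to $H$ (in $\mathcal M=\mathcal B(\mathcal H)$).
   Context: $(x\otimes x)y=\langle y,x\rangle x$ for $y\in\mathcal H$. Let $\{E(\lambda)\}_{\lambda\in\mathbb R}$ be the spectral resolution of $H$. $\mathcal H_{ac}(H)$ is the set of $x\in\mathcal H$ for which $\lambda\mapsto\langle E(\lambda)x,x\rangle$ is locally absolutely continuous on $\mathbb R$. A projection $P\in\mathcal B(\mathcal H)$ is a norm absolutely continuous projection with respect to $H$ if $\lambda\mapsto PE(\lambda)P$ from $\mathbb R$ into $\mathcal B(\mathcal H)$ is locally absolutely continuous in operator norm (for all $a<b$, $\epsilon>0$ there is $\delta>0$ with $\sum_i\|PE(b_i)P-PE(a_i)P\|<\epsilon$ for every finite family of disjoint intervals $(a_i,b_i)\subseteq[a,b]$ with $\sum_i(b_i-a_i)<\delta$). *)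

theory Defs
  imports "HOL-Analysis.Analysis"
begin

text \<open>The separable infinite-dimensional complex Hilbert space is modelled concretely
  as l2(N): square-summable complex sequences.  Operators are functions on sequences,
  only their behaviour on l2 matters.\<close>

type_synonym vec = "nat \<Rightarrow> complex"
type_synonym op = "vec \<Rightarrow> vec"

definition l2 :: "vec set" where
  "l2 = {f. summable (\<lambda>n. (cmod (f n))\<^sup>2)}"

definition ip :: "vec \<Rightarrow> vec \<Rightarrow> complex" where
  "ip f g = (\<Sum>n. f n * cnj (g n))"

definition l2norm :: "vec \<Rightarrow> real" where
  "l2norm f = sqrt (\<Sum>n. (cmod (f n))\<^sup>2)"

definition bounded_op :: "op \<Rightarrow> bool" where
  "bounded_op T \<longleftrightarrow>
     (\<forall>f\<in>l2. T f \<in> l2) \<and>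
     (\<forall>f\<in>l2. \<forall>g\<in>l2. \<forall>a b. T (\<lambda>n. a * f n + b * g n) = (\<lambda>n. a * T f n + b * T g n)) \<and>
     (\<exists>C. \<forall>f\<in>l2. l2norm (T f) \<le> C * l2norm f)"

definition opnorm :: "op \<Rightarrow> real" where
  "opnorm T = Sup {l2norm (T f) | f. f \<in> l2 \<and> l2norm f \<le> 1}"

definition orth_proj :: "op \<Rightarrow> bool" where
  "orth_proj P \<longleftrightarrow> bounded_op P \<and> (\<forall>f\<in>l2. P (P f) = P f) \<and>
     (\<forall>f\<in>l2. \<forall>g\<in>l2. ip (P f) g = ip f (P g))"

text \<open>Spectral resolution (resolution of the identity) of a self-adjoint operator:
  increasing, strongly right-continuous family of orthogonal projections tending strongly
  to 0 at -infinity and to the identity at +infinity.  By the spectral theorem these are in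
  bijection with (densely defined) self-adjoint operators H.\<close>
definition spectral_resolution :: "(real \<Rightarrow> op) \<Rightarrow> bool" where
  "spectral_resolution E \<longleftrightarrow>
     (\<forall>s. orth_proj (E s)) \<and>
     (\<forall>s t. s \<le> t \<longrightarrow> (\<forall>f\<in>l2. E s (E t f) = E s f \<and> E t (E s f) = E s f)) \<and>
     (\<forall>s. \<forall>f\<in>l2. ((\<lambda>t. l2norm (\<lambda>n. E t f n - E s f n)) \<longlongrightarrow> 0) (at_right s)) \<and>
     (\<forall>f\<in>l2. ((\<lambda>t. l2norm (E t f)) \<longlongrightarrow> 0) at_bot) \<and>
     (\<forall>f\<in>l2. ((\<lambda>t. l2norm (\<lambda>n. E t f n - f n)) \<longlongrightarrow> 0) at_top)"

text \<open>Local absolute continuity, with respect to a "variation" D s t measuring the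
  increment over the interval (s,t) (|F t - F s| or a norm of a difference).\<close>
definition loc_abs_cont :: "(real \<Rightarrow> real \<Rightarrow> real) \<Rightarrow> bool" where
  "loc_abs_cont D \<longleftrightarrow>
     (\<forall>a b. a < b \<longrightarrow> (\<forall>\<epsilon>>0. \<exists>\<delta>>0. \<forall>(m::nat) (u::nat \<Rightarrow> real) v.
        (\<forall>i<m. a \<le> u i \<and> u i < v i \<and> v i \<le> b) \<and>
        (\<forall>i<m. \<forall>j<m. i \<noteq> j \<longrightarrow> v i \<le> u j \<or> v j \<le> u i) \<and>
        (\<Sum>i<m. v i - u i) < \<delta>
        \<longrightarrow> (\<Sum>i<m. D (u i) (v i)) < \<epsilon>))"

definition Hac :: "(real \<Rightarrow> op) \<Rightarrow> vec set" where
  "Hac E = {x \<in> l2. loc_abs_cont (\<lambda>s t. cmod (ip (E t x) x - ip (E s x) x))}"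

definition norm_ac_proj :: "(real \<Rightarrow> op) \<Rightarrow> op \<Rightarrow> bool" where
  "norm_ac_proj E P \<longleftrightarrow> orth_proj P \<and>
     loc_abs_cont (\<lambda>s t. opnorm (\<lambda>f n. P (E t (P f)) n - P (E s (P f)) n))"

definition rank_one :: "vec \<Rightarrow> op" where
  "rank_one x = (\<lambda>y n. ip y x * x n)"

end

theory Submission
  imports Defs
begin

lemma l2_summable: "f \<in> l2 \<Longrightarrow> summable (\<lambda>n. (cmod (f n))\<^sup>2)"
  by (simp add: l2_def)

lemma prod_abs_summable:
  assumes "f \<in> l2" "g \<in> l2"
  shows "summable (\<lambda>n. cmod (f n * cnj (g n)))"
proof (rule summable_comparison_test)
  show "\<exists>N. \<forall>n\<ge>N. norm (cmod (f n * cnj (g n))) \<le> ((cmod (f n))\<^sup>2 + (cmod (g n))\<^sup>2) / 2"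
  proof (intro exI allI impI)
    fix n
    have "2 * (cmod (f n) * cmod (g n)) \<le> (cmod (f n))\<^sup>2 + (cmod (g n))\<^sup>2"
    proof -
      have "0 \<le> (cmod (f n) - cmod (g n))\<^sup>2" by simp
      then show ?thesis by (simp add: power2_eq_square algebra_simps)
    qed
    then show "norm (cmod (f n * cnj (g n))) \<le> ((cmod (f n))\<^sup>2 + (cmod (g n))\<^sup>2) / 2"
      by (simp add: norm_mult)
  qed
  show "summable (\<lambda>n. ((cmod (f n))\<^sup>2 + (cmod (g n))\<^sup>2) / 2)"
    using assms by (intro summable_divide summable_add) (auto simp: l2_def)
qed

lemma prod_summable:
  assumes "f \<in> l2" "g \<in> l2"
  shows "summable (\<lambda>n. f n * cnj (g n))"
  by (rule summable_norm_cancel[OF prod_abs_summable[OF assms]])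

lemma scale_l2: "f \<in> l2 \<Longrightarrow> (\<lambda>n. c * f n) \<in> l2"
proof -
  assume "f \<in> l2"
  then have "summable (\<lambda>n. (cmod c)\<^sup>2 * (cmod (f n))\<^sup>2)" unfolding l2_def by (simp add: summable_mult)
  then show ?thesis unfolding l2_def by (simp add: norm_mult power_mult_distrib)
qed

lemma l2norm_scale:
  assumes "f \<in> l2"
  shows "l2norm (\<lambda>n. c * f n) = cmod c * l2norm f"
proof -
  have "(\<Sum>n. (cmod (c * f n))\<^sup>2) = (cmod c)\<^sup>2 * (\<Sum>n. (cmod (f n))\<^sup>2)"
    using l2_summable[OF assms] by (simp add: norm_mult power_mult_distrib suminf_mult)
  then show ?thesis unfolding l2norm_def by (simp add: real_sqrt_mult)
qed

lemma ip_scale_left: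
  assumes "f \<in> l2" "g \<in> l2"
  shows "ip (\<lambda>n. c * f n) g = c * ip f g"
  unfolding ip_def using suminf_mult[OF prod_summable[OF assms], of c]
  by (simp add: mult.assoc)

lemma ip_lin_left:
  assumes "f \<in> l2" "g \<in> l2" "h \<in> l2"
  shows "ip (\<lambda>n. a * f n + b * g n) h = a * ip f h + b * ip g h"
proof -
  have s1: "summable (\<lambda>n. a * (f n * cnj (h n)))"
    using prod_summable[OF assms(1,3)] by (rule summable_mult)
  have s2: "summable (\<lambda>n. b * (g n * cnj (h n)))"
    using prod_summable[OF assms(2,3)] by (rule summable_mult)
  have "ip (\<lambda>n. a * f n + b * g n) h = (\<Sum>n. a * (f n * cnj (h n)) + b * (g n * cnj (h n)))"
    unfolding ip_def by (simp add: algebra_simps)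
  also have "\<dots> = (\<Sum>n. a * (f n * cnj (h n))) + (\<Sum>n. b * (g n * cnj (h n)))"
    using suminf_add[OF s1 s2] by simp
  also have "\<dots> = a * ip f h + b * ip g h"
    unfolding ip_def using prod_summable[OF assms(1,3)] prod_summable[OF assms(2,3)]
    by (simp add: suminf_mult)
  finally show ?thesis .
qed

lemma ip_cnj:
  assumes "f \<in> l2" "g \<in> l2"
  shows "cnj (ip f g) = ip g f"
proof -
  have "cnj (ip f g) = (\<Sum>n. cnj (f n * cnj (g n)))"
    unfolding ip_def
    using bounded_linear.suminf[OF bounded_linear_cnj prod_summable[OF assms]] by simp
  then show ?thesis unfolding ip_def by (simp add: mult.commute)
qed

lemma ip_self:
  assumes "x \<in> l2" "l2norm x = 1"
  shows "ip x x = 1"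
proof -
  have s: "(\<Sum>n. (cmod (x n))\<^sup>2) = 1"
    using assms(2) unfolding l2norm_def
    by (metis real_sqrt_eq_1_iff)
  have "ip x x = (\<Sum>n. complex_of_real ((cmod (x n))\<^sup>2))"
    unfolding ip_def by (simp only: complex_norm_square)
  also have "\<dots> = complex_of_real (\<Sum>n. (cmod (x n))\<^sup>2)"
    by (rule suminf_of_real[OF l2_summable[OF assms(1)], symmetric])
  finally show ?thesis using s by simp
qed

lemma ip_bound:
  assumes "f \<in> l2" "x \<in> l2" "l2norm x = 1"
  shows "cmod (ip f x) \<le> l2norm f"
proof -
  have sx: "(\<Sum>n. (cmod (x n))\<^sup>2) = 1"
    using assms(3) unfolding l2norm_def by (metis real_sqrt_eq_1_iff)
  have sf: "summable (\<lambda>n. (cmod (f n))\<^sup>2)" using assms(1) by (simp add: l2_def)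
  have fnn: "(\<Sum>n. (cmod (f n))\<^sup>2) \<ge> 0" using sf by (simp add: suminf_nonneg)
  define N where "N = l2norm f"
  have N2: "N\<^sup>2 = (\<Sum>n. (cmod (f n))\<^sup>2)" unfolding N_def l2norm_def using fnn by simp
  have c1: "cmod (ip f x) \<le> (\<Sum>n. cmod (f n * cnj (x n)))"
    unfolding ip_def using summable_norm[OF prod_abs_summable[OF assms(1,2)]] by simp
  show ?thesis
  proof (cases "N = 0")
    case True
    then have "(\<Sum>n. (cmod (f n))\<^sup>2) = 0" using N2 by simp
    then have "\<forall>n. (cmod (f n))\<^sup>2 = 0" using suminf_eq_zero_iff[OF sf] by simp
    then have "\<forall>n. f n = 0" by simp
    then have "ip f x = 0" unfolding ip_def by simp
    then show ?thesis unfolding N_def[symmetric] using True by simp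
  next
    case False
    have Npos: "N > 0" using False fnn unfolding N_def l2norm_def by simp
    have b: "cmod (f n * cnj (x n)) \<le> ((cmod (f n))\<^sup>2 / N + N * (cmod (x n))\<^sup>2) / 2" for n
    proof -
      have "0 \<le> (cmod (f n) - N * cmod (x n))\<^sup>2" by simp
      then have "2 * N * (cmod (f n) * cmod (x n)) \<le> (cmod (f n))\<^sup>2 + N\<^sup>2 * (cmod (x n))\<^sup>2"
        by (simp add: power2_eq_square algebra_simps)
      then have "cmod (f n) * cmod (x n) \<le> ((cmod (f n))\<^sup>2 / N + N * (cmod (x n))\<^sup>2) / 2"
        using Npos by (simp add: field_simps power2_eq_square)
      then show ?thesis by (simp add: norm_mult)
    qed
    have ss: "summable (\<lambda>n. ((cmod (f n))\<^sup>2 / N + N * (cmod (x n))\<^sup>2) / 2)"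
      using sf l2_summable[OF assms(2)] by (intro summable_divide summable_add summable_mult) auto
    have sa: "summable (\<lambda>n. (cmod (f n))\<^sup>2 / N)" using sf by (rule summable_divide)
    have sb: "summable (\<lambda>n. N * (cmod (x n))\<^sup>2)" using l2_summable[OF assms(2)] by (rule summable_mult)
    have "(\<Sum>n. cmod (f n * cnj (x n))) \<le> (\<Sum>n. ((cmod (f n))\<^sup>2 / N + N * (cmod (x n))\<^sup>2) / 2)"
      by (rule suminf_le[OF b prod_abs_summable[OF assms(1,2)] ss])
    also have "\<dots> = (\<Sum>n. ((cmod (f n))\<^sup>2 / N + N * (cmod (x n))\<^sup>2)) / 2"
      by (rule suminf_divide[OF summable_add[OF sa sb]])
    also have "(\<Sum>n. ((cmod (f n))\<^sup>2 / N + N * (cmod (x n))\<^sup>2)) = (\<Sum>n. (cmod (f n))\<^sup>2 / N) + (\<Sum>n. N * (cmod (x n))\<^sup>2)"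
      by (rule suminf_add[OF sa sb, symmetric])
    also have "(\<Sum>n. (cmod (f n))\<^sup>2 / N) = (\<Sum>n. (cmod (f n))\<^sup>2) / N"
      by (rule suminf_divide[OF sf])
    also have "(\<Sum>n. N * (cmod (x n))\<^sup>2) = N * (\<Sum>n. (cmod (x n))\<^sup>2)"
      by (rule suminf_mult[OF l2_summable[OF assms(2)]])
    also have "((\<Sum>n. (cmod (f n))\<^sup>2) / N + N * (\<Sum>n. (cmod (x n))\<^sup>2)) / 2 = N"
      unfolding N2[symmetric] sx using Npos by (simp add: power2_eq_square)
    finally show ?thesis using c1 N_def by simp
  qed
qed

lemma rank_one_orth:
  assumes "x \<in> l2" "l2norm x = 1"
  shows "orth_proj (rank_one x)"
  unfolding orth_proj_def bounded_op_def
proof (intro conjI ballI allI)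
  fix f assume f: "f \<in> l2"
  show "rank_one x f \<in> l2" unfolding rank_one_def using scale_l2[OF assms(1)] .
  show "rank_one x (rank_one x f) = rank_one x f"
  proof -
    have "ip (\<lambda>n. ip f x * x n) x = ip f x * ip x x" by (rule ip_scale_left[OF assms(1) assms(1)])
    then have "ip (\<lambda>n. ip f x * x n) x = ip f x" using ip_self[OF assms] by simp
    then show ?thesis unfolding rank_one_def by simp
  qed
next
  fix f g a b assume f: "f \<in> l2" and g: "g \<in> l2"
  show "rank_one x (\<lambda>n. a * f n + b * g n) = (\<lambda>n. a * rank_one x f n + b * rank_one x g n)"
    unfolding rank_one_def using ip_lin_left[OF f g assms(1)] by (simp add: algebra_simps)
  show "ip (rank_one x f) g = ip f (rank_one x g)"
  proof -
    have "ip (rank_one x f) g = ip f x * ip x g"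
      unfolding rank_one_def using ip_scale_left[OF assms(1) g] by simp
    moreover have "ip f (rank_one x g) = cnj (ip g x) * ip f x"
    proof -
      have "ip f (rank_one x g) = cnj (ip (rank_one x g) f)"
        using ip_cnj[OF scale_l2[OF assms(1)] f] unfolding rank_one_def by simp
      also have "\<dots> = cnj (ip g x * ip x f)"
        unfolding rank_one_def using ip_scale_left[OF assms(1) f] by simp
      also have "\<dots> = cnj (ip g x) * ip f x" using ip_cnj[OF assms(1) f] by simp
      finally show ?thesis .
    qed
    ultimately show ?thesis using ip_cnj[OF g assms(1)] by simp
  qed
next
  show "\<exists>C. \<forall>f\<in>l2. l2norm (rank_one x f) \<le> C * l2norm f"
  proof (intro exI ballI)
    fix f assume f: "f \<in> l2"
    show "l2norm (rank_one x f) \<le> 1 * l2norm f"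
      unfolding rank_one_def using l2norm_scale[OF assms(1)] assms(2) ip_bound[OF f assms] by simp
  qed
qed

lemma opnorm_key:
  assumes "spectral_resolution E" "x \<in> l2" "l2norm x = 1"
  shows "opnorm (\<lambda>f n. rank_one x (E t (rank_one x f)) n - rank_one x (E s (rank_one x f)) n)
         = cmod (ip (E t x) x - ip (E s x) x)"
proof -
  let ?d = "ip (E t x) x - ip (E s x) x"
  have Eb: "bounded_op (E r)" for r using assms(1) unfolding spectral_resolution_def orth_proj_def by blast
  have Ex: "E r x \<in> l2" for r using Eb[of r] assms(2) unfolding bounded_op_def by blast
  have Elin: "E r (\<lambda>n. c * x n) = (\<lambda>n. c * E r x n)" for r c
  proof -
    have "\<forall>f\<in>l2. \<forall>g\<in>l2. \<forall>a b. E r (\<lambda>n. a * f n + b * g n) = (\<lambda>n. a * E r f n + b * E r g n)"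
      using Eb[of r] unfolding bounded_op_def by blast
    then have "E r (\<lambda>n. c * x n + 0 * x n) = (\<lambda>n. c * E r x n + 0 * E r x n)"
      using assms(2) by blast
    then show ?thesis by simp
  qed
  have eq: "(\<lambda>n. rank_one x (E t (rank_one x f)) n - rank_one x (E s (rank_one x f)) n)
       = (\<lambda>n. (ip f x * ?d) * x n)" for f
  proof -
    have "ip (E r (\<lambda>n. ip f x * x n)) x = ip f x * ip (E r x) x" for r
      unfolding Elin by (rule ip_scale_left[OF Ex assms(2)])
    then show ?thesis unfolding rank_one_def by (simp add: algebra_simps)
  qed
  have S: "{l2norm ((\<lambda>f n. rank_one x (E t (rank_one x f)) n - rank_one x (E s (rank_one x f)) n) f) | f. f \<in> l2 \<and> l2norm f \<le> 1}
        = {cmod (ip f x) * cmod ?d | f. f \<in> l2 \<and> l2norm f \<le> 1}"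
    using eq l2norm_scale[OF assms(2)] assms(3) by (simp add: norm_mult)
  have "Sup {cmod (ip f x) * cmod ?d | f. f \<in> l2 \<and> l2norm f \<le> 1} = cmod ?d"
  proof (rule cSup_eq_maximum)
    show "cmod ?d \<in> {cmod (ip f x) * cmod ?d | f. f \<in> l2 \<and> l2norm f \<le> 1}"
      using assms ip_self[OF assms(2,3)] by force
    show "y \<le> cmod ?d" if yin: "y \<in> {cmod (ip f x) * cmod ?d | f. f \<in> l2 \<and> l2norm f \<le> 1}" for y
    proof -
      obtain f where f: "f \<in> l2" "l2norm f \<le> 1" "y = cmod (ip f x) * cmod ?d" using yin by blast
      have "cmod (ip f x) \<le> 1" using ip_bound[OF f(1) assms(2,3)] f(2) by simp
      then show ?thesis using f(3) by (simp add: mult_left_le_one_le)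
    qed
  qed
  then show ?thesis unfolding opnorm_def S .
qed

theorem proposition4p3:
  fixes E :: "real \<Rightarrow> op" and x :: vec
  assumes "spectral_resolution E"
    and "x \<in> l2" and "l2norm x = 1"
  shows "x \<in> Hac E \<longleftrightarrow> norm_ac_proj E (rank_one x)"
proof -
  have "(\<lambda>s t. opnorm (\<lambda>f n. rank_one x (E t (rank_one x f)) n - rank_one x (E s (rank_one x f)) n))
      = (\<lambda>s t. cmod (ip (E t x) x - ip (E s x) x))"
    using opnorm_key[OF assms] by blast
  then show ?thesis
    unfolding Hac_def norm_ac_proj_def using rank_one_orth[OF assms(2,3)] assms(2) by simp
qed

end
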